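(* Let $X$ be a locally compact Hausdorff space. If $X$ contains an open dense $\sigma$-compact set and $C_0(X)$ has the countable sup property, then $X$ is CCC.
   Context: $C_0(X)$ is the vector lattice (pointwise order) of continuous real-valued functions on $X$ vanishing at infinity. A vector lattice has the countable sup property if every nonempty subset possessing a supremum contains a countable subset with the same supremum. $X$ is CCC if every family of pairwise disjoint open subsets of $X$ is countable. *)

theory Defs
  imports "HOL-Analysis.Analysis"
begin

text \<open>Functions are taken extensional (zero outside topspace X) so that each element
  of C_0(X) is represented uniquely.\<close>
definition C0 :: "'a topology \<Rightarrow> ('a \<Rightarrow> real) set" where
  "C0 X = {f. continuous_map X euclideanreal f
              \<and> (\<forall>e>0. compactin X {x \<in> topspace X. \<bar>f x\<bar> \<ge> e})
              \<and> (\<forall>x. x \<notin> topspace X \<longrightarrow> f x = 0)}"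

definition C0_le :: "'a topology \<Rightarrow> ('a \<Rightarrow> real) \<Rightarrow> ('a \<Rightarrow> real) \<Rightarrow> bool" where
  "C0_le X f g \<longleftrightarrow> (\<forall>x\<in>topspace X. f x \<le> g x)"

definition C0_is_sup :: "'a topology \<Rightarrow> ('a \<Rightarrow> real) set \<Rightarrow> ('a \<Rightarrow> real) \<Rightarrow> bool" where
  "C0_is_sup X S g \<longleftrightarrow> g \<in> C0 X \<and> (\<forall>f\<in>S. C0_le X f g)
     \<and> (\<forall>h\<in>C0 X. (\<forall>f\<in>S. C0_le X f h) \<longrightarrow> C0_le X g h)"

definition countable_sup_property_C0 :: "'a topology \<Rightarrow> bool" where
  "countable_sup_property_C0 X \<longleftrightarrow>
     (\<forall>S g. S \<subseteq> C0 X \<and> S \<noteq> {} \<and> C0_is_sup X S g \<longrightarrow>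
        (\<exists>T\<subseteq>S. countable T \<and> C0_is_sup X T g))"

definition CCC_space :: "'a topology \<Rightarrow> bool" where
  "CCC_space X \<longleftrightarrow>
     (\<forall>F. (\<forall>U\<in>F. openin X U) \<and> pairwise disjnt F \<longrightarrow> countable F)"

definition sigma_compactin :: "'a topology \<Rightarrow> 'a set \<Rightarrow> bool" where
  "sigma_compactin X U \<longleftrightarrow> (\<exists>K :: nat \<Rightarrow> 'a set. (\<forall>n. compactin X (K n)) \<and> U = (\<Union>n. K n))"

end

theory Submission
  imports Defs
begin

lemma closedin_ge_abs:
  assumes "continuous_map X euclideanreal f"
  shows "closedin X {x \<in> topspace X. e \<le> \<bar>f x\<bar>}"
proof -
  have "closedin euclideanreal {y::real. e \<le> \<bar>y\<bar>}"
  proof -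
    have "closed {y::real. e \<le> \<bar>y\<bar>}" by (intro closed_Collect_le continuous_intros)
    then show ?thesis by simp
  qed
  then show ?thesis
    using closedin_continuous_map_preimage[OF assms] by force
qed

lemma C0_mult_bounded:
  assumes phi: "\<phi> \<in> C0 X" and psi: "continuous_map X euclideanreal \<psi>"
    and b: "\<And>x. x \<in> topspace X \<Longrightarrow> \<bar>\<psi> x\<bar> \<le> 1"
  shows "(\<lambda>x. \<phi> x * \<psi> x) \<in> C0 X"
proof -
  have cphi: "continuous_map X euclideanreal \<phi>"
    and cpt: "\<And>e. e > 0 \<Longrightarrow> compactin X {x \<in> topspace X. \<bar>\<phi> x\<bar> \<ge> e}"
    and z: "\<And>x. x \<notin> topspace X \<Longrightarrow> \<phi> x = 0"
    using phi by (auto simp: C0_def)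
  have cm: "continuous_map X euclideanreal (\<lambda>x. \<phi> x * \<psi> x)"
    using cphi psi by (intro continuous_map_real_mult)
  have "compactin X {x \<in> topspace X. \<bar>\<phi> x * \<psi> x\<bar> \<ge> e}" if "e > 0" for e
  proof (rule closed_compactin[OF cpt[OF that]])
    show "{x \<in> topspace X. e \<le> \<bar>\<phi> x * \<psi> x\<bar>} \<subseteq> {x \<in> topspace X. e \<le> \<bar>\<phi> x\<bar>}"
    proof clarify
      fix x assume x: "x \<in> topspace X" "e \<le> \<bar>\<phi> x * \<psi> x\<bar>"
      have "\<bar>\<phi> x * \<psi> x\<bar> \<le> \<bar>\<phi> x\<bar>"
        using b[OF x(1)] by (simp add: abs_mult mult_left_le)
      then show "e \<le> \<bar>\<phi> x\<bar>" using x by linarith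
    qed
    show "closedin X {x \<in> topspace X. e \<le> \<bar>\<phi> x * \<psi> x\<bar>}"
      by (rule closedin_ge_abs[OF cm])
  qed
  then show ?thesis using cm z by (auto simp: C0_def)
qed

lemma exists_phi:
  assumes "locally_compact_space X" "Hausdorff_space X" "compactin X K"
  obtains \<phi> where "\<phi> \<in> C0 X" "\<And>x. 0 \<le> \<phi> x" "\<And>x. \<phi> x \<le> 1" "\<And>x. x \<in> K \<Longrightarrow> \<phi> x = 1"
proof -
  have cr: "completely_regular_space X"
    using assms locally_compact_regular_imp_completely_regular_space by blast
  obtain U L where UL: "openin X U" "compactin X L" "closedin X L" "K \<subseteq> U" "U \<subseteq> L"
    using assms locally_compact_space_compact_closed_compact by metis
  have "closedin X (topspace X - U)" using UL by blast
  moreover have "disjnt K (topspace X - U)" using UL by (auto simp: disjnt_def)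
  ultimately obtain f where f: "continuous_map X (top_of_set {0..1}) f"
      "f ` (topspace X - U) \<subseteq> {0::real}" "f ` K \<subseteq> {1}"
    using Urysohn_completely_regular_compact_closed[of 0 1 X K "topspace X - U"] cr assms(3)
    by auto
  define \<phi> where "\<phi> x = (if x \<in> topspace X then f x else 0)" for x
  have fr: "x \<in> topspace X \<Longrightarrow> 0 \<le> f x \<and> f x \<le> 1" for x
    using f(1) by (auto simp: continuous_map_in_subtopology)
  have cf: "continuous_map X euclideanreal f"
    using f(1) by (simp add: continuous_map_in_subtopology)
  have cphi: "continuous_map X euclideanreal \<phi>"
    using cf by (rule continuous_map_eq) (simp add: \<phi>_def)
  have "compactin X {x \<in> topspace X. \<bar>\<phi> x\<bar> \<ge> e}" if "e > 0" for e
  proof (rule closed_compactin[OF UL(2)])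
    show "{x \<in> topspace X. e \<le> \<bar>\<phi> x\<bar>} \<subseteq> L"
    proof clarify
      fix x assume x: "x \<in> topspace X" "e \<le> \<bar>\<phi> x\<bar>"
      show "x \<in> L"
      proof (rule ccontr)
        assume "x \<notin> L"
        then have "x \<in> topspace X - U" using UL x by auto
        then have "f x = 0" using f(2) by auto
        then show False using x that by (simp add: \<phi>_def)
      qed
    qed
    show "closedin X {x \<in> topspace X. e \<le> \<bar>\<phi> x\<bar>}"
      by (rule closedin_ge_abs[OF cphi])
  qed
  then have "\<phi> \<in> C0 X" using cphi by (auto simp: C0_def \<phi>_def)
  moreover have "\<And>x. 0 \<le> \<phi> x" "\<And>x. \<phi> x \<le> 1" using fr by (auto simp: \<phi>_def)
  moreover have "\<And>x. x \<in> K \<Longrightarrow> \<phi> x = 1"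
    using f(3) compactin_subset_topspace[OF assms(3)] by (auto simp: \<phi>_def)
  ultimately show ?thesis using that by blast
qed

lemma exists_bump:
  assumes "completely_regular_space X" "openin X W" "x \<in> W"
  obtains \<psi> where "continuous_map X euclideanreal \<psi>" "\<psi> x = 1"
    "\<And>y. y \<in> topspace X \<Longrightarrow> 0 \<le> \<psi> y \<and> \<psi> y \<le> 1"
    "\<And>y. y \<in> topspace X \<Longrightarrow> y \<notin> W \<Longrightarrow> \<psi> y = 0"
proof -
  have "closedin X (topspace X - W)" "x \<in> topspace X - (topspace X - W)"
    using assms openin_subset by auto
  then obtain f :: "'a \<Rightarrow> real" where f: "continuous_map X (top_of_set {0..1}) f"
      "f x = 0" "f ` (topspace X - W) \<subseteq> {1}"
    using assms(1) unfolding completely_regular_space_def by blast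
  have cf: "continuous_map X euclideanreal f"
    using f(1) by (simp add: continuous_map_in_subtopology)
  have fr: "y \<in> topspace X \<Longrightarrow> 0 \<le> f y \<and> f y \<le> 1" for y
    using f(1) by (auto simp: continuous_map_in_subtopology)
  show ?thesis
  proof
    show "continuous_map X euclideanreal (\<lambda>y. 1 - f y)"
      using cf by (intro continuous_intros) auto
  qed (use f fr in auto)
qed

theorem proposition5p6:
  fixes X :: "'a topology"
  assumes "locally_compact_space X" and "Hausdorff_space X"
    and "\<exists>U. openin X U \<and> X closure_of U = topspace X \<and> sigma_compactin X U"
    and "countable_sup_property_C0 X"
  shows "CCC_space X"
  unfolding CCC_space_def
proof (intro allI impI; elim conjE)
  fix F assume Fo: "\<forall>U\<in>F. openin X U" and Fd: "pairwise disjnt F"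
  show "countable F"
  proof (rule ccontr)
    assume unc: "\<not> countable F"
    have cr: "completely_regular_space X"
      using assms locally_compact_regular_imp_completely_regular_space by blast
    obtain U Kn where U: "openin X U" "X closure_of U = topspace X"
      and Kn: "\<And>n::nat. compactin X (Kn n)" "U = (\<Union>n. Kn n)"
      using assms(3) unfolding sigma_compactin_def by blast
    have "\<exists>n. \<not> countable {V\<in>F. V \<inter> Kn n \<noteq> {}}"
    proof (rule ccontr)
      assume "\<not> ?thesis"
      then have "countable (\<Union>n. {V\<in>F. V \<inter> Kn n \<noteq> {}})" by auto
      moreover have "F \<subseteq> insert {} (\<Union>n. {V\<in>F. V \<inter> Kn n \<noteq> {}})"
      proof
        fix V assume V: "V \<in> F"
        show "V \<in> insert {} (\<Union>n. {V\<in>F. V \<inter> Kn n \<noteq> {}})"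
        proof (cases "V = {}")
          case False
          have "openin X V" using Fo V by blast
          then have "U \<inter> V \<noteq> {}" using dense_intersects_open[THEN iffD1, OF U(2)] False by blast
          then show ?thesis using V Kn(2) by blast
        qed simp
      qed
      ultimately have "countable (insert {} (\<Union>n. {V\<in>F. V \<inter> Kn n \<noteq> {}}))" by simp
      then show False using unc countable_subset[OF \<open>F \<subseteq> _\<close>] by blast
    qed
    then obtain n where FKu: "\<not> countable {V\<in>F. V \<inter> Kn n \<noteq> {}}" by blast
    define FK where "FK = {V\<in>F. V \<inter> Kn n \<noteq> {}}"
    obtain \<phi> where phi: "\<phi> \<in> C0 X" "\<And>x. 0 \<le> \<phi> x" "\<And>x. \<phi> x \<le> 1"
      "\<And>x. x \<in> Kn n \<Longrightarrow> \<phi> x = 1"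
      using exists_phi[OF assms(1,2) Kn(1)] by blast
    have cphi: "continuous_map X euclideanreal \<phi>" using phi(1) by (simp add: C0_def)
    define W' where "W' = topspace X - X closure_of (\<Union>F)"
    define G where "G = insert W' F"
    have Go: "\<forall>W\<in>G. openin X W"
      using Fo by (auto simp: G_def W'_def)
    have FT: "\<Union>F \<subseteq> topspace X" using Fo openin_subset by blast
    have Gd: "pairwise disjnt G"
    proof -
      have "disjnt W' Y \<and> disjnt Y W'" if "Y \<in> F" for Y
      proof -
        have "Y \<subseteq> X closure_of (\<Union>F)" using closure_of_subset[OF FT] that by blast
        then show ?thesis by (auto simp: W'_def disjnt_def)
      qed
      then show ?thesis using Fd by (simp add: pairwise_insert G_def)
    qed
    have Gdense: "X closure_of (\<Union>G) = topspace X"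
    proof -
      have "X closure_of (\<Union>G) = X closure_of W' \<union> X closure_of (\<Union>F)"
        by (simp add: G_def closure_of_Un)
      moreover have "W' \<subseteq> X closure_of W'"
        using closure_of_subset[of W' X] by (auto simp: W'_def)
      ultimately have "topspace X \<subseteq> X closure_of (\<Union>G)" by (auto simp: W'_def)
      then show ?thesis using closure_of_subset_topspace[of X "\<Union>G"] by (rule subset_antisym[rotated])
    qed
    define S where "S = {f \<in> C0 X. (\<exists>W\<in>G. \<forall>x\<in>topspace X. x \<notin> W \<longrightarrow> f x = 0) \<and> C0_le X f \<phi>}"
    have SC: "S \<subseteq> C0 X" by (auto simp: S_def)
    have z0: "(\<lambda>x. 0::real) \<in> C0 X"
      by (simp add: C0_def)
    have "(\<lambda>x. 0::real) \<in> S" using z0 phi(2) by (auto simp: S_def G_def C0_le_def)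
    then have Sne: "S \<noteq> {}" by blast
    have supS: "C0_is_sup X S \<phi>"
      unfolding C0_is_sup_def
    proof (intro conjI ballI impI)
      show "\<phi> \<in> C0 X" by (rule phi(1))
      show "C0_le X f \<phi>" if "f \<in> S" for f using that by (simp add: S_def)
      fix h assume hC: "h \<in> C0 X" and hub: "\<forall>f\<in>S. C0_le X f h"
      have ch: "continuous_map X euclideanreal h" using hC by (simp add: C0_def)
      define D where "D = {x \<in> topspace X. h x - \<phi> x \<in> {0..}}"
      have Dc: "closedin X D"
        unfolding D_def
        by (rule closedin_continuous_map_preimage) (use ch cphi in \<open>auto intro: continuous_map_diff\<close>)
      have "\<Union>G \<subseteq> D"
      proof
        fix x assume "x \<in> \<Union>G"
        then obtain W where W: "W \<in> G" "x \<in> W" by blast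
        have xt: "x \<in> topspace X" using W Go openin_subset by blast
        have Wo: "openin X W" using W Go by blast
        obtain \<psi> where psi: "continuous_map X euclideanreal \<psi>" "\<psi> x = 1"
          "\<And>y. y \<in> topspace X \<Longrightarrow> 0 \<le> \<psi> y \<and> \<psi> y \<le> 1"
          "\<And>y. y \<in> topspace X \<Longrightarrow> y \<notin> W \<Longrightarrow> \<psi> y = 0"
          using exists_bump[OF cr Wo W(2)] by blast
        have "(\<lambda>y. \<phi> y * \<psi> y) \<in> C0 X"
          by (rule C0_mult_bounded[OF phi(1) psi(1)]) (use psi(3) in force)
        moreover have "C0_le X (\<lambda>y. \<phi> y * \<psi> y) \<phi>"
          unfolding C0_le_def using psi(3) phi(2) by (simp add: mult_left_le)
        ultimately have "(\<lambda>y. \<phi> y * \<psi> y) \<in> S"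
          using W psi(4) by (auto simp: S_def)
        then have "\<phi> x * \<psi> x \<le> h x" using hub xt by (auto simp: C0_le_def)
        then show "x \<in> D" using psi(2) xt by (simp add: D_def)
      qed
      then have "X closure_of (\<Union>G) \<subseteq> D" using Dc by (rule closure_of_minimal)
      then show "C0_le X \<phi> h" using Gdense by (auto simp: C0_le_def D_def)
    qed
    obtain T where T: "T \<subseteq> S" "countable T" "C0_is_sup X T \<phi>"
      using assms(4) SC Sne supS unfolding countable_sup_property_C0_def by blast
    define Wsel where "Wsel (f::'a \<Rightarrow> real) = (SOME W. W \<in> G \<and> (\<forall>x\<in>topspace X. x \<notin> W \<longrightarrow> f x = 0))" for f
    have Wsel: "Wsel f \<in> G \<and> (\<forall>x\<in>topspace X. x \<notin> Wsel f \<longrightarrow> f x = 0)" if "f \<in> T" for f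
    proof -
      have "\<exists>W. W \<in> G \<and> (\<forall>x\<in>topspace X. x \<notin> W \<longrightarrow> f x = 0)"
        using that T(1) by (auto simp: S_def)
      then show ?thesis unfolding Wsel_def by (rule someI_ex)
    qed
    have "countable (Wsel ` T)" using T(2) by simp
    then have "\<not> FK \<subseteq> Wsel ` T" using FKu unfolding FK_def using countable_subset by blast
    then obtain W0 where W0: "W0 \<in> FK" "W0 \<notin> Wsel ` T" by blast
    then obtain x0 where x0: "x0 \<in> W0" "x0 \<in> Kn n" by (auto simp: FK_def)
    have W0G: "W0 \<in> G" using W0 by (auto simp: FK_def G_def)
    have W0o: "openin X W0" using W0G Go by blast
    obtain \<psi> where psi: "continuous_map X euclideanreal \<psi>" "\<psi> x0 = 1"
      "\<And>y. y \<in> topspace X \<Longrightarrow> 0 \<le> \<psi> y \<and> \<psi> y \<le> 1"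
      "\<And>y. y \<in> topspace X \<Longrightarrow> y \<notin> W0 \<Longrightarrow> \<psi> y = 0"
      using exists_bump[OF cr W0o x0(1)] by blast
    define h where "h y = \<phi> y * (1 - \<psi> y)" for y
    have hC: "h \<in> C0 X"
      unfolding h_def
      by (rule C0_mult_bounded[OF phi(1)]) (use psi in \<open>auto intro: continuous_intros\<close>)
    have "\<forall>f\<in>T. C0_le X f h"
    proof (intro ballI)
      fix f assume fT: "f \<in> T"
      have fle: "C0_le X f \<phi>" using fT T(1) by (auto simp: S_def)
      show "C0_le X f h"
        unfolding C0_le_def
      proof (intro ballI)
        fix y assume yt: "y \<in> topspace X"
        show "f y \<le> h y"
        proof (cases "y \<in> W0")
          case True
          have "Wsel f \<noteq> W0" using W0 fT by blast
          then have "disjnt (Wsel f) W0" using Gd Wsel[OF fT] W0G by (auto simp: pairwise_def)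
          then have "y \<notin> Wsel f" using True by (auto simp: disjnt_def)
          then have "f y = 0" using Wsel[OF fT] yt by blast
          moreover have "0 \<le> h y" using phi(2)[of y] psi(3)[OF yt] by (simp add: h_def)
          ultimately show ?thesis by simp
        next
          case False
          then have "h y = \<phi> y" using psi(4)[OF yt] by (simp add: h_def)
          then show ?thesis using fle yt by (simp add: C0_le_def)
        qed
      qed
    qed
    then have "C0_le X \<phi> h" using T(3) hC by (simp add: C0_is_sup_def)
    moreover have "x0 \<in> topspace X" using x0 Kn(1) compactin_subset_topspace by blast
    ultimately have "\<phi> x0 \<le> h x0" by (simp add: C0_le_def)
    then show False using phi(4)[OF x0(2)] psi(2) by (simp add: h_def)
  qed
qed

end
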